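(* Let $A$ be a finite abelian $p$-group, $f\colon\mathbb{Z}_p^h\to A$ a continuous homomorphism, and $q\colon A\to A/\operatorname{im}(f)$ the quotient map. Then (1) $\mathcal{F}_f=q^*\mathcal{F}_{A/\operatorname{im}(f)}$; and (2) if $\operatorname{im}(f)\subseteq pA$, then $\mathcal{F}_f=\mathcal{F}_A$.
   Context: For a finite abelian group $B$, $\mathcal{F}_B$ denotes the family of all proper subgroups of $B$. $\mathcal{F}_f$ is the minimal family of subgroups of $A$ (closed under taking subgroups) containing every proper subgroup $H\subsetneq A$ through which $f$ factors. For a homomorphism $q\colon A\to A'$ and a family $\mathcal{F}$ of subgroups of $A'$, $q^*\mathcal{F}$ is the minimal family of proper subgroups of $A$ containing $\{q^{-1}(H)\mid H\in\mathcal{F}\}$. *)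

theory Defs
  imports "HOL-Algebra.Algebra"
begin

text \<open>p-adic integers as the inverse limit of the rings Z/p^n Z: a p-adic integer is a
  compatible sequence of residues x n in {0..<p^n}.\<close>
definition padic_int :: "nat \<Rightarrow> (nat \<Rightarrow> int) set" where
  "padic_int p = {x. \<forall>n. 0 \<le> x n \<and> x n < int p ^ n \<and> x (Suc n) mod (int p ^ n) = x n}"

text \<open>The additive group Z_p^h: tuples indexed by i < h (extensional outside), with
  componentwise addition computed level-wise modulo p^n.\<close>
definition padic_pow :: "nat \<Rightarrow> nat \<Rightarrow> (nat \<Rightarrow> nat \<Rightarrow> int) monoid" where
  "padic_pow p h =
     \<lparr> carrier = {x. (\<forall>i<h. x i \<in> padic_int p) \<and> (\<forall>i\<ge>h. x i = (\<lambda>_. 0))},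
       monoid.mult = (\<lambda>x y i n. if i < h then (x i n + y i n) mod (int p ^ n) else 0),
       one = (\<lambda>_ _. 0) \<rparr>"

text \<open>Continuity of a map Z_p^h \<rightarrow> A, where A is discrete and Z_p^h carries the
  profinite (p-adic) topology with basic neighbourhoods x + p^N Z_p^h.\<close>
definition padic_continuous :: "nat \<Rightarrow> nat \<Rightarrow> ((nat \<Rightarrow> nat \<Rightarrow> int) \<Rightarrow> 'a) \<Rightarrow> bool" where
  "padic_continuous p h f \<longleftrightarrow>
     (\<forall>x\<in>carrier (padic_pow p h). \<exists>N. \<forall>y\<in>carrier (padic_pow p h).
        (\<forall>i<h. x i N = y i N) \<longrightarrow> f y = f x)"

definition sub_closure :: "('a, 'b) monoid_scheme \<Rightarrow> 'a set set \<Rightarrow> 'a set set" where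
  "sub_closure G S = \<Inter>{\<F>. \<F> \<subseteq> {K. subgroup K G} \<and> S \<subseteq> \<F> \<and>
      (\<forall>K\<in>\<F>. \<forall>L. subgroup L G \<and> L \<subseteq> K \<longrightarrow> L \<in> \<F>)}"

definition proper_subgroups :: "('a, 'b) monoid_scheme \<Rightarrow> 'a set set" where
  "proper_subgroups B = {H. subgroup H B \<and> H \<noteq> carrier B}"

definition family_of_map :: "('a, 'b) monoid_scheme \<Rightarrow> ('c, 'd) monoid_scheme \<Rightarrow> ('c \<Rightarrow> 'a) \<Rightarrow> 'a set set" where
  "family_of_map A D f = sub_closure A {H. subgroup H A \<and> H \<noteq> carrier A \<and> f ` carrier D \<subseteq> H}"

definition pullback_family :: "('a, 'b) monoid_scheme \<Rightarrow> ('a \<Rightarrow> 'c) \<Rightarrow> 'c set set \<Rightarrow> 'a set set" where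
  "pullback_family A q \<F> = sub_closure A {{a \<in> carrier A. q a \<in> H} | H. H \<in> \<F>}"

end

theory Submission
  imports Defs
begin

lemma (in group) finite_submonoid_subgroup:
  assumes fin: "finite (carrier G)" and S: "S \<subseteq> carrier G" and one: "\<one> \<in> S"
    and mult: "\<And>a b. a \<in> S \<Longrightarrow> b \<in> S \<Longrightarrow> a \<otimes> b \<in> S"
  shows "subgroup S G"
proof (rule subgroupI)
  show "S \<subseteq> carrier G" by fact
  show "S \<noteq> {}" using one by blast
  show "a \<otimes> b \<in> S" if "a \<in> S" "b \<in> S" for a b using mult that .
next
  fix a assume a: "a \<in> S"
  have pw: "a [^] (n::nat) \<in> S" for n
    by (induction n) (use one mult a in auto)
  have ac: "a \<in> carrier G" using a S by blast
  have pos: "order G \<ge> 1"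
    using fin ac unfolding order_def by (metis One_nat_def Suc_leI card_gt_0_iff empty_iff)
  have "a [^] (order G - 1) \<otimes> a = a [^] order G"
    using pos ac by (metis Suc_diff_le diff_Suc_1 nat_pow_Suc)
  also have "\<dots> = \<one>" using pow_order_eq_1[OF ac] .
  finally have "inv a = a [^] (order G - 1)"
    using ac by (metis inv_equality nat_pow_closed)
  then show "inv a \<in> S" using pw by simp
qed

lemma subgroup_vimage:
  assumes "group_hom G H h" "subgroup K H"
  shows "subgroup {x \<in> carrier G. h x \<in> K} G"
proof -
  interpret group_hom G H h by fact
  interpret K: subgroup K H by fact
  show ?thesis
    by (rule G.subgroupI) auto
qed

lemma padic_one_carrier: "p > 0 \<Longrightarrow> one (padic_pow p h) \<in> carrier (padic_pow p h)"
  by (auto simp: padic_pow_def padic_int_def)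

lemma padic_one_mult: "one (padic_pow p h) \<otimes>\<^bsub>padic_pow p h\<^esub> one (padic_pow p h) = one (padic_pow p h)"
  by (auto simp: padic_pow_def fun_eq_iff)

lemma padic_mult_closed:
  assumes p: "p > 0" and x: "x \<in> carrier (padic_pow p h)" and y: "y \<in> carrier (padic_pow p h)"
  shows "x \<otimes>\<^bsub>padic_pow p h\<^esub> y \<in> carrier (padic_pow p h)"
proof -
  have "(\<lambda>n. (x i n + y i n) mod (int p ^ n)) \<in> padic_int p" if i: "i < h" for i
  proof -
    have xi: "x i \<in> padic_int p" and yi: "y i \<in> padic_int p" using x y i by (auto simp: padic_pow_def)
    have "(x i (Suc n) + y i (Suc n)) mod int p ^ Suc n mod int p ^ n = (x i n + y i n) mod int p ^ n" for n
    proof -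
      have d: "int p ^ n dvd int p ^ Suc n" by simp
      have "(x i (Suc n) + y i (Suc n)) mod int p ^ Suc n mod int p ^ n
          = (x i (Suc n) + y i (Suc n)) mod int p ^ n" using mod_mod_cancel[OF d] by simp
      also have "\<dots> = (x i (Suc n) mod int p ^ n + y i (Suc n) mod int p ^ n) mod int p ^ n"
        by (simp add: mod_add_eq)
      also have "\<dots> = (x i n + y i n) mod int p ^ n" using xi yi by (simp add: padic_int_def)
      finally show ?thesis .
    qed
    then show ?thesis using p by (simp add: padic_int_def)
  qed
  then show ?thesis using x y by (auto simp: padic_pow_def)
qed

lemma image_subgroup:
  fixes A (structure)
  assumes G: "group A" and fin: "finite (carrier A)" and p: "p > 0"
    and f: "f \<in> hom (padic_pow p h) A"
  shows "subgroup (f ` carrier (padic_pow p h)) A"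
proof -
  interpret group A by fact
  let ?D = "padic_pow p h"
  have fc: "f x \<in> carrier A" if "x \<in> carrier ?D" for x using f that by (auto simp: hom_def)
  have fm: "f (x \<otimes>\<^bsub>?D\<^esub> y) = f x \<otimes> f y" if "x \<in> carrier ?D" "y \<in> carrier ?D" for x y
    using f that by (auto simp: hom_def)
  have "f \<one>\<^bsub>?D\<^esub> = f \<one>\<^bsub>?D\<^esub> \<otimes> f \<one>\<^bsub>?D\<^esub>"
    using fm[OF padic_one_carrier[OF p] padic_one_carrier[OF p]] padic_one_mult by simp
  then have f1: "f \<one>\<^bsub>?D\<^esub> = \<one>"
    using fc[OF padic_one_carrier[OF p]] l_cancel_one'[of "f \<one>\<^bsub>?D\<^esub>" "f \<one>\<^bsub>?D\<^esub>"] by simp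
  show ?thesis
  proof (rule finite_submonoid_subgroup[OF fin])
    show "f ` carrier ?D \<subseteq> carrier A" using fc by blast
    show "\<one> \<in> f ` carrier ?D" using imageI[OF padic_one_carrier[of p h, OF p], of f] f1 by simp
    show "a \<otimes> b \<in> f ` carrier ?D" if ab: "a \<in> f ` carrier ?D" "b \<in> f ` carrier ?D" for a b
    proof -
      obtain x y where xy: "x \<in> carrier ?D" "y \<in> carrier ?D" "a = f x" "b = f y" using ab by blast
      then have "a \<otimes> b = f (x \<otimes>\<^bsub>?D\<^esub> y)" using fm by simp
      then show ?thesis using padic_mult_closed[OF p xy(1,2)] by blast
    qed
  qed
qed

lemma part1:
  fixes A (structure)
  assumes G: "comm_group A" and I: "subgroup I A"
  shows "{H. subgroup H A \<and> H \<noteq> carrier A \<and> I \<subseteq> H}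
       = {{a \<in> carrier A. I #>\<^bsub>A\<^esub> a \<in> H} | H. H \<in> proper_subgroups (A Mod I)}"
proof -
  interpret comm_group A by fact
  have N: "I \<lhd> A" using subgroup_imp_normal[OF I] .
  interpret N: normal I A by fact
  have QG: "group (A Mod I)" by (rule N.factorgroup_is_group)
  have hom: "group_hom A (A Mod I) (\<lambda>a. I #> a)"
    using N.r_coset_hom_Mod QG by (simp add: group_hom_def group_hom_axioms_def is_group)
  interpret Ih: subgroup I A by fact
  show ?thesis
  proof (rule Set.set_eqI, rule iffI)
    fix H assume "H \<in> {H. subgroup H A \<and> H \<noteq> carrier A \<and> I \<subseteq> H}"
    then have H: "subgroup H A" "H \<noteq> carrier A" "I \<subseteq> H" by auto
    let ?Q = "(\<lambda>a. I #> a) ` H"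
    have Qs: "subgroup ?Q (A Mod I)"
      using group_hom.subgroup_img_is_subgroup[OF hom H(1)] .
    have hback: "a \<in> H" if ha: "a \<in> carrier A" "I #> a \<in> ?Q" for a
    proof -
      obtain b where b: "b \<in> H" "I #> a = I #> b" using ha by blast
      have bc: "b \<in> carrier A" using subgroup.mem_carrier[OF H(1) b(1)] .
      have "a \<in> I #> b" using repr_independenceD[OF I ha(1)] b(2) by simp
      then obtain i where "i \<in> I" "a = i \<otimes> b" unfolding r_coset_def by blast
      then show ?thesis using subgroup.m_closed[OF H(1)] H(3) b(1) by blast
    qed
    have Qp: "?Q \<noteq> carrier (A Mod I)"
    proof
      assume eq: "?Q = carrier (A Mod I)"
      have "carrier A \<subseteq> H"
      proof
        fix a assume a: "a \<in> carrier A"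
        have "I #> a \<in> carrier (A Mod I)" using a by (simp add: carrier_FactGroup)
        then show "a \<in> H" using hback a eq by blast
      qed
      then show False using H(2) subgroup.subset[OF H(1)] by blast
    qed
    have "H = {a \<in> carrier A. I #> a \<in> ?Q}"
    proof (rule Set.set_eqI, rule iffI)
      fix x assume "x \<in> H"
      then show "x \<in> {a \<in> carrier A. I #> a \<in> ?Q}" using subgroup.mem_carrier[OF H(1)] by blast
    next
      fix x assume "x \<in> {a \<in> carrier A. I #> a \<in> ?Q}"
      then show "x \<in> H" using hback by blast
    qed
    moreover have "?Q \<in> proper_subgroups (A Mod I)" using Qs Qp by (simp add: proper_subgroups_def)
    ultimately show "H \<in> {{a \<in> carrier A. I #>\<^bsub>A\<^esub> a \<in> H} | H. H \<in> proper_subgroups (A Mod I)}"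
      by blast
  next
    fix K assume "K \<in> {{a \<in> carrier A. I #>\<^bsub>A\<^esub> a \<in> H} | H. H \<in> proper_subgroups (A Mod I)}"
    then obtain Q where K: "K = {a \<in> carrier A. I #> a \<in> Q}" and Q: "subgroup Q (A Mod I)"
      "Q \<noteq> carrier (A Mod I)" unfolding proper_subgroups_def by blast
    have Ks: "subgroup K A" using subgroup_vimage[OF hom Q(1)] K by simp
    have IK: "I \<subseteq> K"
    proof
      fix i assume i: "i \<in> I"
      have "I #> i = I" using subgroup.rcos_const[OF I is_group i] .
      moreover have "I \<in> Q" using subgroup.one_closed[OF Q(1)] by simp
      moreover have "i \<in> carrier A" using subgroup.mem_carrier[OF I i] .
      ultimately show "i \<in> K" using K by simp
    qed
    have "K \<noteq> carrier A"
    proof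
      assume "K = carrier A"
      then have "carrier (A Mod I) \<subseteq> Q" using K by (auto simp: carrier_FactGroup)
      then show False using Q(2) subgroup.subset[OF Q(1)] by blast
    qed
    then show "K \<in> {H. subgroup H A \<and> H \<noteq> carrier A \<and> I \<subseteq> H}" using Ks IK by blast
  qed
qed


lemma (in group) subgroup_pow_closed:
  assumes "subgroup M G" "a \<in> M"
  shows "a [^] (n::nat) \<in> M"
proof (induction n)
  case 0 then show ?case using subgroup.one_closed[OF assms(1)] by simp
next
  case (Suc n)
  have "a [^] Suc n = a [^] n \<otimes> a" by simp
  then show ?case using subgroup.m_closed[OF assms(1) Suc assms(2)] by simp
qed

lemma part2:
  fixes A (structure)
  assumes G: "comm_group A" and fin: "finite (carrier A)" and ord: "order A = p ^ k"
    and I: "I \<subseteq> {a [^] p | a. a \<in> carrier A}"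
    and L: "subgroup L A" "L \<noteq> carrier A"
  shows "\<exists>M. subgroup M A \<and> M \<noteq> carrier A \<and> L \<subseteq> M \<and> I \<subseteq> M"
proof -
  interpret comm_group A by fact
  let ?P = "{M. subgroup M A \<and> M \<noteq> carrier A \<and> L \<subseteq> M}"
  have "?P \<subseteq> Pow (carrier A)"
  proof
    fix B assume "B \<in> ?P"
    then have "subgroup B A" by simp
    then show "B \<in> Pow (carrier A)" using subgroup.subset by simp
  qed
  moreover have "finite (Pow (carrier A))" using fin by simp
  ultimately have finP: "finite ?P" by (rule finite_subset)
  have "L \<in> ?P" using L by blast
  then have "?P \<noteq> {}" by blast
  then obtain M where MP: "M \<in> ?P" and Mmax: "\<And>B. B \<in> ?P \<Longrightarrow> M \<subseteq> B \<Longrightarrow> M = B"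
    using finite_has_maximal[OF finP \<open>?P \<noteq> {}\<close>] by auto
  have M: "subgroup M A" "M \<noteq> carrier A" "L \<subseteq> M" using MP by auto
  have "I \<subseteq> M"
  proof
    fix x assume "x \<in> I"
    have "x \<in> {a [^] p | a. a \<in> carrier A}" using I \<open>x \<in> I\<close> by (rule subsetD)
    then obtain a where a: "a \<in> carrier A" "x = a [^] p" by (auto simp only: mem_Collect_eq)
    have xc: "x \<in> carrier A" using a by simp
    show "x \<in> M"
    proof (rule ccontr)
      assume xM: "x \<notin> M"
      define S where "S = {m \<otimes> x [^] (n::nat) | m n. m \<in> M}"
      have Mc: "m \<in> carrier A" if "m \<in> M" for m using subgroup.mem_carrier[OF M(1) that] .
      have Ss: "subgroup S A"
      proof (rule finite_submonoid_subgroup[OF fin])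
        show "S \<subseteq> carrier A" unfolding S_def using Mc xc by blast
        have "\<one> = \<one> \<otimes> x [^] (0::nat)" by simp
        then show "\<one> \<in> S" unfolding S_def using subgroup.one_closed[OF M(1)] by blast
        show "u \<otimes> v \<in> S" if uv: "u \<in> S" "v \<in> S" for u v
        proof -
          obtain m n m' n' where mn: "m \<in> M" "m' \<in> M" "u = m \<otimes> x [^] (n::nat)" "v = m' \<otimes> x [^] (n'::nat)"
            using uv unfolding S_def by blast
          have mc: "m \<in> carrier A" "m' \<in> carrier A" using mn Mc by auto
          have "u \<otimes> v = (m \<otimes> m') \<otimes> (x [^] n \<otimes> x [^] n')"
            using mn(3,4) mc xc by (simp add: m_ac)
          also have "\<dots> = (m \<otimes> m') \<otimes> x [^] (n + n')" using nat_pow_mult[OF xc] by simp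
          finally show ?thesis unfolding S_def using subgroup.m_closed[OF M(1) mn(1,2)] by blast
        qed
      qed
      have MS: "M \<subseteq> S"
      proof
        fix m assume "m \<in> M"
        moreover have "m = m \<otimes> x [^] (0::nat)" using Mc[OF \<open>m \<in> M\<close>] by simp
        ultimately show "m \<in> S" unfolding S_def by blast
      qed
      have "x = \<one> \<otimes> x [^] (1::nat)" using xc by simp
      then have xS: "x \<in> S" unfolding S_def using subgroup.one_closed[OF M(1)] by blast
      have "S = carrier A"
      proof (rule ccontr)
        assume "S \<noteq> carrier A"
        then have "S \<in> ?P" using Ss MS M(3) by blast
        then have "M = S" using Mmax MS by blast
        then show False using xS xM by blast
      qed
      then have "a \<in> S" using a by simp
      then obtain m n where mn: "m \<in> M" "a = m \<otimes> x [^] (n::nat)" unfolding S_def by blast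
      have mc: "m \<in> carrier A" using Mc mn by simp
      have xn: "x [^] n = a [^] (p * n)" using a nat_pow_pow by simp
      have step: "\<exists>m'\<in>M. a = m' \<otimes> a [^] ((p * n) ^ t)" for t
      proof (induction t)
        case 0
        have "a = \<one> \<otimes> a [^] ((p * n) ^ 0)" using a by simp
        then show ?case using subgroup.one_closed[OF M(1)] by blast
      next
        case (Suc t)
        then obtain m' where m': "m' \<in> M" "a = m' \<otimes> a [^] ((p * n) ^ t)" by blast
        let ?N = "(p * n) ^ t"
        have m'c: "m' \<in> carrier A" using Mc m' by simp
        have "a [^] ?N = (m \<otimes> a [^] (p * n)) [^] ?N" using mn(2) xn by simp
        also have "\<dots> = m [^] ?N \<otimes> (a [^] (p * n)) [^] ?N"
          using nat_pow_distrib mc a by simp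
        also have "\<dots> = m [^] ?N \<otimes> a [^] ((p * n) ^ Suc t)"
          using nat_pow_pow a by (simp add: mult.commute)
        finally have "a = m' \<otimes> (m [^] ?N \<otimes> a [^] ((p * n) ^ Suc t))" using m' by simp
        then have "a = (m' \<otimes> m [^] ?N) \<otimes> a [^] ((p * n) ^ Suc t)"
          using m'c mc a by (simp add: m_assoc)
        moreover have "m' \<otimes> m [^] ?N \<in> M"
          using subgroup.m_closed[OF M(1) m'(1) subgroup_pow_closed[OF M(1) mn(1)]] .
        ultimately show ?case by blast
      qed
      obtain m' where m': "m' \<in> M" "a = m' \<otimes> a [^] ((p * n) ^ k)" using step[of k] by blast
      have "a [^] ((p * n) ^ k) = a [^] (p ^ k * n ^ k)" by (simp only: power_mult_distrib)
      also have "\<dots> = (a [^] (p ^ k)) [^] (n ^ k)" using nat_pow_pow[OF a(1)] by simp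
      also have "\<dots> = \<one>" using pow_order_eq_1[OF a(1)] ord by simp
      finally have "a = m' \<otimes> \<one>" using m'(2) by simp
      then have "a = m'" using Mc[OF m'(1)] by simp
      then have "a \<in> M" using m' by simp
      then have "x \<in> M" using a subgroup_pow_closed[OF M(1)] by simp
      then show False using xM by blast
    qed
  qed
  then show ?thesis using M by blast
qed


theorem lemma6p5:
  fixes A :: "('a, 'b) monoid_scheme" and p h :: nat and f :: "(nat \<Rightarrow> nat \<Rightarrow> int) \<Rightarrow> 'a"
  assumes "comm_group A" and "finite (carrier A)" and "Factorial_Ring.prime p"
    and "\<exists>k. order A = p ^ k"
    and "f \<in> hom (padic_pow p h) A"
    and "padic_continuous p h f"
  shows "(family_of_map A (padic_pow p h) f
           = pullback_family A (\<lambda>a. f ` carrier (padic_pow p h) #>\<^bsub>A\<^esub> a)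
               (proper_subgroups (A Mod (f ` carrier (padic_pow p h)))))
         \<and> (f ` carrier (padic_pow p h) \<subseteq> {a [^]\<^bsub>A\<^esub> p | a. a \<in> carrier A}
           \<longrightarrow> family_of_map A (padic_pow p h) f = proper_subgroups A)"
proof -
  let ?I = "f ` carrier (padic_pow p h)"
  have p0: "p > 0" using assms(3) prime_gt_0_nat by blast
  have grp: "group A" using assms(1) comm_group.axioms(2) by blast
  have Isub: "subgroup ?I A" using image_subgroup[OF grp assms(2) p0 assms(5)] .
  have P1: "family_of_map A (padic_pow p h) f
           = pullback_family A (\<lambda>a. ?I #>\<^bsub>A\<^esub> a) (proper_subgroups (A Mod ?I))"
    unfolding family_of_map_def pullback_family_def using part1[OF assms(1) Isub] by simp
  have P2: "family_of_map A (padic_pow p h) f = proper_subgroups A"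
    if Ip: "?I \<subseteq> {a [^]\<^bsub>A\<^esub> p | a. a \<in> carrier A}"
  proof -
    obtain k where k: "order A = p ^ k" using assms(4) by blast
    let ?S = "{H. subgroup H A \<and> H \<noteq> carrier A \<and> ?I \<subseteq> H}"
    have "sub_closure A ?S = proper_subgroups A"
    proof (rule Set.equalityI)
      show "sub_closure A ?S \<subseteq> proper_subgroups A"
        unfolding sub_closure_def
      proof (rule Inter_lower, intro CollectI conjI)
        show "proper_subgroups A \<subseteq> {K. subgroup K A}" by (auto simp: proper_subgroups_def)
        show "?S \<subseteq> proper_subgroups A" by (auto simp: proper_subgroups_def)
        show "\<forall>K\<in>proper_subgroups A. \<forall>L. subgroup L A \<and> L \<subseteq> K \<longrightarrow> L \<in> proper_subgroups A"
          unfolding proper_subgroups_def using subgroup.subset by blast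
      qed
    next
      show "proper_subgroups A \<subseteq> sub_closure A ?S"
      proof
        fix L assume "L \<in> proper_subgroups A"
        then have L: "subgroup L A" "L \<noteq> carrier A" by (auto simp: proper_subgroups_def)
        obtain M where M: "subgroup M A" "M \<noteq> carrier A" "L \<subseteq> M" "?I \<subseteq> M"
          using part2[OF assms(1,2) k Ip L] by blast
        have MS: "M \<in> ?S" using M by blast
        show "L \<in> sub_closure A ?S"
          unfolding sub_closure_def
        proof (rule InterI)
          fix F assume "F \<in> {\<F>. \<F> \<subseteq> {K. subgroup K A} \<and> ?S \<subseteq> \<F> \<and>
              (\<forall>K\<in>\<F>. \<forall>L. subgroup L A \<and> L \<subseteq> K \<longrightarrow> L \<in> \<F>)}"
          then have "?S \<subseteq> F" "\<forall>K\<in>F. \<forall>L. subgroup L A \<and> L \<subseteq> K \<longrightarrow> L \<in> F" by auto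
          then show "L \<in> F" using MS L(1) M(3) by blast
        qed
      qed
    qed
    then show ?thesis unfolding family_of_map_def .
  qed
  show ?thesis using P1 P2 by blast
qed

end
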